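(* Let $\Gamma$ be a metrized graph that is a tree with $v$ vertices. Then $$W(\Gamma)=\frac{1}{4} \Big[ v \cdot \ell(\Gamma) + \sum_{p, q \in V(\Gamma)} \mathrm{val}(q)\, r(p,q) \Big].$$ In particular, if each edge length is equal to $1$, $$W(\Gamma)=\frac{1}{4} \Big[ v(v-1)+ \sum_{p, q \in V(\Gamma)} \mathrm{val}(q)\, r(p,q) \Big].$$
   Context: A metrized graph is a finite connected graph each of whose edges is identified with a closed segment of positive length; its vertex set $V(\Gamma)$ is a finite nonempty set containing every point of valence $\neq 2$, and $v=\#V(\Gamma)$. $\mathrm{val}(q)$ is the valence of $q$ (number of directions emanating from $q$). $\ell(\Gamma)$ is the total length. $r(p,q)$ is the effective resistance between $p$ and $q$ (edges as resistors of resistance equal to length); on a tree it equals the path distance $d(p,q)$. The Wiener index is $W(\Gamma)=\frac12\sum_{p,q\in V(\Gamma)}d(p,q)$. *)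

theory Defs
  imports Complex_Main
begin

definition is_path :: "'a set set \<Rightarrow> 'a list \<Rightarrow> bool" where
  "is_path E xs \<longleftrightarrow> xs \<noteq> [] \<and> distinct xs \<and>
     (\<forall>i < length xs - 1. {xs ! i, xs ! Suc i} \<in> E)"

definition is_cycle :: "'a set set \<Rightarrow> 'a list \<Rightarrow> bool" where
  "is_cycle E xs \<longleftrightarrow> length xs \<ge> 3 \<and> is_path E xs \<and> {last xs, hd xs} \<in> E"

definition metrized_tree :: "'a set \<Rightarrow> 'a set set \<Rightarrow> ('a set \<Rightarrow> real) \<Rightarrow> bool" where
  "metrized_tree V E L \<longleftrightarrow>
     finite V \<and> V \<noteq> {} \<and>
     (\<forall>e\<in>E. \<exists>a b. a \<noteq> b \<and> a \<in> V \<and> b \<in> V \<and> e = {a, b}) \<and>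
     (\<forall>e\<in>E. L e > 0) \<and>
     (\<forall>p\<in>V. \<forall>q\<in>V. \<exists>xs. is_path E xs \<and> hd xs = p \<and> last xs = q) \<and>
     \<not> (\<exists>xs. is_cycle E xs)"

definition path_len :: "('a set \<Rightarrow> real) \<Rightarrow> 'a list \<Rightarrow> real" where
  "path_len L xs = (\<Sum>i < length xs - 1. L {xs ! i, xs ! Suc i})"

definition tree_dist :: "'a set set \<Rightarrow> ('a set \<Rightarrow> real) \<Rightarrow> 'a \<Rightarrow> 'a \<Rightarrow> real" where
  "tree_dist E L p q = Min {path_len L xs | xs. is_path E xs \<and> hd xs = p \<and> last xs = q}"

text \<open>Effective resistance; on a tree it equals the path distance (standing fact of the
context), which is how it is defined here for trees.\<close>
definition tree_resistance :: "'a set set \<Rightarrow> ('a set \<Rightarrow> real) \<Rightarrow> 'a \<Rightarrow> 'a \<Rightarrow> real" where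
  "tree_resistance E L p q = tree_dist E L p q"

definition valence :: "'a set set \<Rightarrow> 'a \<Rightarrow> nat" where
  "valence E q = card {e \<in> E. q \<in> e}"

definition total_length :: "'a set set \<Rightarrow> ('a set \<Rightarrow> real) \<Rightarrow> real" where
  "total_length E L = (\<Sum>e\<in>E. L e)"

definition wiener_index :: "'a set \<Rightarrow> 'a set set \<Rightarrow> ('a set \<Rightarrow> real) \<Rightarrow> real" where
  "wiener_index V E L = (1/2) * (\<Sum>p\<in>V. \<Sum>q\<in>V. tree_dist E L p q)"

end

theory Submission
  imports Defs
begin

fun ch :: "'a set set \<Rightarrow> 'a list \<Rightarrow> bool" where
  "ch E [] = True" | "ch E [x] = True" | "ch E (x#y#xs) = ({x,y} \<in> E \<and> ch E (y#xs))"

fun plen :: "('a set \<Rightarrow> real) \<Rightarrow> 'a list \<Rightarrow> real" where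
  "plen L [] = 0" | "plen L [x] = 0" | "plen L (x#y#xs) = L {x,y} + plen L (y#xs)"

lemma ch_iff: "(\<forall>i<length xs - 1. {xs!i, xs!Suc i} \<in> E) \<longleftrightarrow> ch E xs"
  by (induction E xs rule: ch.induct) (auto simp: All_less_Suc2)

lemma path_len_plen: "path_len L xs = plen L xs"
  unfolding path_len_def
  by (induction L xs rule: plen.induct) (auto simp del: sum.lessThan_Suc simp: sum.lessThan_Suc_shift)

lemma is_path_iff: "is_path E xs \<longleftrightarrow> xs \<noteq> [] \<and> distinct xs \<and> ch E xs"
  unfolding is_path_def ch_iff by (rule refl)

lemma ch_append: "ch E (xs @ y # ys) \<longleftrightarrow> ch E (xs @ [y]) \<and> ch E (y # ys)"
proof (induction xs)
  case (Cons a xs) then show ?case by (cases xs) auto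
qed auto

lemma ch_tl: "ch E (x # xs) \<Longrightarrow> ch E xs"
  by (cases xs) auto

lemma ch_rev: "ch E (rev xs) = ch E xs"
proof (induction E xs rule: ch.induct)
  case (3 E x y xs)
  have "ch E (rev (x#y#xs)) = ch E (rev xs @ y # [x])" by simp
  also have "\<dots> = (ch E (rev xs @ [y]) \<and> ch E [y,x])" by (rule ch_append)
  finally show ?case using 3 by (auto simp add: insert_commute)
qed auto

lemma ch_snoc: "xs \<noteq> [] \<Longrightarrow> ch E (xs @ [b]) \<longleftrightarrow> ch E xs \<and> {last xs, b} \<in> E"
proof (induction xs)
  case (Cons a xs) then show ?case by (cases xs) auto
qed auto

lemma plen_snoc: "xs \<noteq> [] \<Longrightarrow> plen L (xs @ [b]) = plen L xs + L {last xs, b}"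
proof (induction xs)
  case (Cons a xs) then show ?case by (cases xs) auto
qed auto

context
  fixes V :: "'a set" and E :: "'a set set" and L :: "'a set \<Rightarrow> real"
  assumes T: "metrized_tree V E L"
begin

lemma finV: "finite V" using T by (simp add: metrized_tree_def)
lemma edges: "e \<in> E \<Longrightarrow> \<exists>a b. a \<noteq> b \<and> a \<in> V \<and> b \<in> V \<and> e = {a, b}"
  using T by (simp add: metrized_tree_def)
lemma conn: "p \<in> V \<Longrightarrow> q \<in> V \<Longrightarrow> \<exists>xs. is_path E xs \<and> hd xs = p \<and> last xs = q"
  using T by (simp add: metrized_tree_def)
lemma acyc: "\<not> is_cycle E c" using T by (simp add: metrized_tree_def)

lemma EV: "{a,b} \<in> E \<Longrightarrow> a \<in> V \<and> b \<in> V \<and> a \<noteq> b"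
  using edges[of "{a,b}"] by (auto simp: doubleton_eq_iff)

lemma EsubV: "e \<in> E \<Longrightarrow> e \<subseteq> V"
  using edges by blast

lemma finE: "finite E"
proof -
  have "E \<subseteq> Pow V" using EsubV by blast
  then show ?thesis using finV finite_subset by blast
qed

lemma uniq: "is_path E xs \<Longrightarrow> is_path E ys \<Longrightarrow> hd xs = hd ys \<Longrightarrow> last xs = last ys \<Longrightarrow> xs = ys"
proof (induction xs arbitrary: ys)
  case Nil then show ?case by (simp add: is_path_iff)
next
  case (Cons x xs')
  obtain y ys' where ys: "ys = y#ys'" using Cons.prems by (cases ys) (auto simp: is_path_iff)
  have xy: "x = y" using Cons.prems ys by simp
  have dx: "distinct (x#xs')" "ch E (x#xs')" using Cons.prems by (auto simp: is_path_iff)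
  have dy: "distinct (x#ys')" "ch E (x#ys')" using Cons.prems ys xy by (auto simp: is_path_iff)
  show ?case
  proof (cases "xs' = []")
    case True
    then show ?thesis using Cons.prems ys xy dy
      by (cases "ys' = []") auto
  next
    case F1: False
    show ?thesis
    proof (cases "ys' = []")
      case True
      then show ?thesis using Cons.prems ys xy dx F1 by auto
    next
      case F2: False
      have p1: "is_path E xs'" using F1 dx ch_tl by (auto simp: is_path_iff)
      have p2: "is_path E ys'" using F2 dy ch_tl by (auto simp: is_path_iff)
      have lasts: "last xs' = last ys'" using Cons.prems ys F1 F2 by simp
      show ?thesis
      proof (cases "hd xs' = hd ys'")
        case True
        then show ?thesis using Cons.IH[OF p1 p2 True lasts] ys xy by simp
      next
        case False
        have "\<exists>z\<in>set xs'. z \<in> set ys'" using lasts F1 F2 last_in_set by metis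
        then obtain A z B where xsd: "xs' = A @ z # B" and zy: "z \<in> set ys'"
          and Ay: "\<forall>a\<in>set A. a \<notin> set ys'"
          using split_list_first_prop[of xs' "\<lambda>z. z \<in> set ys'"] by blast
        obtain C D where ysd: "ys' = C @ z # D" using split_list[OF zy] by blast
        define c where "c = x # A @ z # rev C"
        have len: "length c \<ge> 3"
        proof (cases "A = [] \<and> C = []")
          case True
          then have "hd xs' = hd ys'" using xsd ysd by simp
          then show ?thesis using False by simp
        qed (auto simp: c_def Suc_le_eq)
        have dc: "distinct c" using dx dy xsd ysd Ay by (auto simp: c_def)
        have c1: "ch E ((x#A) @ [z])" using dx xsd ch_append[of E "x#A" z B] by simp
        have "ch E ((x#C) @ [z])" using dy ysd ch_append[of E "x#C" z D] by simp
        then have "ch E (C @ [z])" using ch_tl by (metis append_Cons)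
        then have c2: "ch E (z # rev C)" using ch_rev[of E "C @ [z]"] by simp
        have cc: "ch E c" using c1 c2 ch_append[of E "x#A" z "rev C"] by (simp add: c_def)
        have cl: "{last c, hd c} \<in> E"
        proof (cases C)
          case Nil
          then have "{x,z} \<in> E" using dy ysd by simp
          then show ?thesis using Nil by (simp add: c_def insert_commute)
        next
          case (Cons w C')
          then have "{x,w} \<in> E" using dy ysd by simp
          then show ?thesis using Cons by (simp add: c_def insert_commute)
        qed
        have "is_cycle E c" using len dc cc cl by (auto simp: is_cycle_def is_path_iff c_def)
        with acyc show ?thesis by blast
      qed
    qed
  qed
qed

definition pth :: "'a \<Rightarrow> 'a \<Rightarrow> 'a list" where
  "pth p q = (THE xs. is_path E xs \<and> hd xs = p \<and> last xs = q)"

lemma pth_eq: "is_path E xs \<Longrightarrow> pth (hd xs) (last xs) = xs"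
  unfolding pth_def by (rule the_equality) (auto intro: uniq)

lemma pth: "p \<in> V \<Longrightarrow> q \<in> V \<Longrightarrow> is_path E (pth p q) \<and> hd (pth p q) = p \<and> last (pth p q) = q"
  using conn[of p q] pth_eq by metis

lemma dist_eq: "p \<in> V \<Longrightarrow> q \<in> V \<Longrightarrow> tree_dist E L p q = plen L (pth p q)"
proof -
  assume pq: "p \<in> V" "q \<in> V"
  have "{path_len L xs | xs. is_path E xs \<and> hd xs = p \<and> last xs = q} = {plen L (pth p q)}"
    using pth[OF pq] pth_eq by (auto simp: path_len_plen)
  then show ?thesis by (simp add: tree_dist_def)
qed

lemma pth_same: "pth p p = [p]"
  using pth_eq[of "[p]"] by (simp add: is_path_iff)

lemma F2:
  assumes e: "{a,b} \<in> E" and p: "p \<in> V"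
  shows "pth p b = pth p a @ [b] \<or> pth p a = pth p b @ [a]"
proof -
  have ab: "a \<in> V" "b \<in> V" "a \<noteq> b" using EV[OF e] by auto
  define P where "P = pth p a"
  have P: "is_path E P" "hd P = p" "last P = a" using pth[OF p ab(1)] by (auto simp: P_def)
  show ?thesis
  proof (cases "b \<in> set P")
    case False
    have "is_path E (P @ [b])" using P False e ch_snoc[of P E b] by (auto simp: is_path_iff)
    from pth_eq[OF this] have "pth p b = P @ [b]" using P by (simp add: is_path_iff)
    then show ?thesis by (simp add: P_def)
  next
    case True
    then obtain X Y where Pd: "P = X @ b # Y" using split_list by metis
    have Yn: "Y \<noteq> []" using P Pd ab by auto
    have "a = last Y" using P(3) Pd Yn by simp
    then have aY: "a \<in> set Y" using Yn by simp
    have dP: "distinct P" "ch E P" using P by (auto simp: is_path_iff)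
    have aX: "a \<notin> set X" using dP Pd aY by auto
    have ch1: "ch E (X @ [b])" using dP Pd ch_append by metis
    have q1: "is_path E (X @ [b])" using ch1 dP Pd by (auto simp: is_path_iff)
    have h1: "hd (X @ [b]) = p" using P Pd by (cases X) auto
    have e1: "pth p b = X @ [b]" using pth_eq[OF q1] h1 by simp
    have "ch E ((X @ [b]) @ [a])" using ch1 e ch_snoc[of "X @ [b]" E a] by (simp add: insert_commute)
    then have q2: "is_path E (X @ [b, a])" using dP Pd aX ab by (auto simp: is_path_iff)
    have h2: "hd (X @ [b, a]) = p" using P Pd by (cases X) auto
    have "pth p a = X @ [b, a]" using pth_eq[OF q2] h2 by simp
    then show ?thesis using e1 by simp
  qed
qed

definition par :: "'a \<Rightarrow> 'a \<Rightarrow> 'a" where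
  "par p q = last (butlast (pth p q))"

lemma par:
  assumes p: "p \<in> V" and q: "q \<in> V" and pq: "q \<noteq> p"
  shows "par p q \<in> V \<and> par p q \<noteq> q \<and> {par p q, q} \<in> E \<and> pth p q = pth p (par p q) @ [q]"
proof -
  define P where "P = pth p q"
  have P: "is_path E P" "hd P = p" "last P = q" using pth[OF p q] by (auto simp: P_def)
  define B where "B = butlast P"
  have Pne: "P \<noteq> []" using P by (simp add: is_path_iff)
  have PB: "P = B @ [q]" using Pne P(3) append_butlast_last_id unfolding B_def by metis
  have Bne: "B \<noteq> []" using PB P pq by auto
  have chB: "ch E B" and ed: "{last B, q} \<in> E" using P PB Bne ch_snoc[of B E q] by (auto simp: is_path_iff)
  have dB: "distinct B" "q \<notin> set B" using P PB by (auto simp: is_path_iff)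
  have pB: "is_path E B" using Bne chB dB by (simp add: is_path_iff)
  have hB: "hd B = p" using P PB Bne by simp
  have "pth p (last B) = B" using pth_eq[OF pB] hB by simp
  moreover have "par p q = last B" by (simp add: par_def B_def P_def)
  ultimately show ?thesis using PB ed EV[OF ed] dB Bne last_in_set P_def by metis
qed

lemma bij: "p \<in> V \<Longrightarrow> bij_betw (\<lambda>q. {par p q, q}) (V - {p}) E"
proof -
  assume p: "p \<in> V"
  show ?thesis unfolding bij_betw_def
  proof (intro conjI)
    show "inj_on (\<lambda>q. {par p q, q}) (V - {p})"
    proof (rule inj_onI)
      fix q1 q2 assume q1: "q1 \<in> V - {p}" and q2: "q2 \<in> V - {p}" and eq: "{par p q1, q1} = {par p q2, q2}"
      show "q1 = q2"
      proof (rule ccontr)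
        assume ne: "q1 \<noteq> q2"
        have e1: "q1 = par p q2" by (metis ne eq doubleton_eq_iff)
        have e2: "q2 = par p q1" by (metis ne eq doubleton_eq_iff)
        have A2: "pth p q2 = pth p (par p q2) @ [q2]" using par[OF p, of q2] q2 by blast
        have A1: "pth p q1 = pth p (par p q1) @ [q1]" using par[OF p, of q1] q1 by blast
        have "pth p q2 = pth p q1 @ [q2]" using A2 by (simp only: e1[symmetric])
        then have l1: "length (pth p q2) = length (pth p q1) + 1" by (simp only: length_append_singleton)
        have "pth p q1 = pth p q2 @ [q1]" using A1 by (simp only: e2[symmetric])
        then have l2: "length (pth p q1) = length (pth p q2) + 1" by (simp only: length_append_singleton)
        from l1 l2 have "length (pth p q2) = length (pth p q2) + 2" by linarith
        then show False by simp
      qed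
    qed
    show "(\<lambda>q. {par p q, q}) ` (V - {p}) = E"
    proof
      show "(\<lambda>q. {par p q, q}) ` (V - {p}) \<subseteq> E" using par[OF p] by auto
      show "E \<subseteq> (\<lambda>q. {par p q, q}) ` (V - {p})"
      proof
        fix e assume e: "e \<in> E"
        then obtain a b where ab: "e = {a,b}" using edges by blast
        have ab2: "a \<in> V" "b \<in> V" "a \<noteq> b" using EV e ab by auto
        have key: "e \<in> (\<lambda>q. {par p q, q}) ` (V - {p})"
          if eq: "pth p y = pth p x @ [y]" and xy: "e = {x, y}" "x \<in> V" "y \<in> V" for x y
        proof -
          have ne: "pth p x \<noteq> []" using pth[OF p xy(2)] by (simp add: is_path_iff)
          have "y \<noteq> p" using eq pth_same ne by (metis append_self_conv2 butlast_snoc)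
          moreover have "par p y = x" using eq ne pth[OF p xy(2)] by (simp add: par_def)
          ultimately show ?thesis using xy by auto
        qed
        show "e \<in> (\<lambda>q. {par p q, q}) ` (V - {p})"
          using F2[OF e[unfolded ab] p] key ab ab2 by (metis insert_commute)
      qed
    qed
  qed
qed

lemma dist_par: "p \<in> V \<Longrightarrow> q \<in> V \<Longrightarrow> q \<noteq> p \<Longrightarrow>
   tree_dist E L p q = tree_dist E L p (par p q) + L {par p q, q}"
proof -
  assume a: "p \<in> V" "q \<in> V" "q \<noteq> p"
  have pp: "par p q \<in> V" "pth p q = pth p (par p q) @ [q]" using par[OF a] by auto
  have ne: "pth p (par p q) \<noteq> []" using pth[OF a(1) pp(1)] by (simp add: is_path_iff)
  show ?thesis using dist_eq[OF a(1,2)] dist_eq[OF a(1) pp(1)] pp plen_snoc[OF ne] pth[OF a(1) pp(1)]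
    by simp
qed

lemma key: "p \<in> V \<Longrightarrow> (\<Sum>q\<in>V. real (valence E q) * tree_dist E L p q)
    = 2 * (\<Sum>q\<in>V. tree_dist E L p q) - total_length E L"
proof -
  assume p: "p \<in> V"
  define d where "d = tree_dist E L p"
  have s1: "real (valence E q) * d q = (\<Sum>e\<in>E. if q \<in> e then d q else 0)" for q
  proof -
    have "{e \<in> E. q \<in> e} = E \<inter> {e. q \<in> e}" by auto
    then show ?thesis by (simp add: valence_def sum.If_cases finE)
  qed
  have s2: "(\<Sum>q\<in>V. if q \<in> e then d q else 0) = (\<Sum>q\<in>e. d q)" if e: "e \<in> E" for e
  proof -
    have "V \<inter> {q. q \<in> e} = e" using EsubV[OF e] by auto
    then show ?thesis by (simp add: sum.If_cases finV)
  qed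
  have "(\<Sum>q\<in>V. real (valence E q) * d q) = (\<Sum>q\<in>V. \<Sum>e\<in>E. if q \<in> e then d q else 0)"
    using s1 by simp
  also have "\<dots> = (\<Sum>e\<in>E. \<Sum>q\<in>V. if q \<in> e then d q else 0)" by (rule sum.swap)
  also have "\<dots> = (\<Sum>e\<in>E. \<Sum>q\<in>e. d q)" using s2 by simp
  also have "\<dots> = (\<Sum>q\<in>V - {p}. \<Sum>x\<in>{par p q, q}. d x)"
    using sum.reindex_bij_betw[OF bij[OF p], of "\<lambda>e. \<Sum>x\<in>e. d x"] by simp
  also have "\<dots> = (\<Sum>q\<in>V - {p}. 2 * d q - L {par p q, q})"
  proof (rule sum.cong)
    fix q assume q: "q \<in> V - {p}"
    have "par p q \<noteq> q" using par[OF p] q by auto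
    then show "(\<Sum>x\<in>{par p q, q}. d x) = 2 * d q - L {par p q, q}"
      using dist_par[OF p] q by (simp add: d_def)
  qed simp
  also have "\<dots> = 2 * (\<Sum>q\<in>V - {p}. d q) - (\<Sum>q\<in>V - {p}. L {par p q, q})"
    by (simp add: sum_subtractf sum_distrib_left)
  also have "(\<Sum>q\<in>V - {p}. L {par p q, q}) = total_length E L"
    using sum.reindex_bij_betw[OF bij[OF p], of L] by (simp add: total_length_def)
  also have "(\<Sum>q\<in>V - {p}. d q) = (\<Sum>q\<in>V. d q)"
  proof -
    have "d p = 0" using dist_eq[OF p p] pth_same by (simp add: d_def)
    then show ?thesis using p finV by (simp add: sum_diff1)
  qed
  finally show ?thesis by (simp add: d_def)
qed

lemma cardE: "card E = card V - 1"
proof -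
  obtain p where p: "p \<in> V" using T by (auto simp: metrized_tree_def)
  show ?thesis using bij_betw_same_card[OF bij[OF p]] p finV by simp
qed

end

theorem theorem4p2:
  fixes V :: "'a set" and E :: "'a set set" and L :: "'a set \<Rightarrow> real"
  assumes "metrized_tree V E L"
  shows "wiener_index V E L =
           (1/4) * (real (card V) * total_length E L
              + (\<Sum>p\<in>V. \<Sum>q\<in>V. real (valence E q) * tree_resistance E L p q))
       \<and> ((\<forall>e\<in>E. L e = 1) \<longrightarrow>
           wiener_index V E L =
           (1/4) * (real (card V) * (real (card V) - 1)
              + (\<Sum>p\<in>V. \<Sum>q\<in>V. real (valence E q) * tree_resistance E L p q)))"
proof -
  note T = assms
  have S: "(\<Sum>p\<in>V. \<Sum>q\<in>V. real (valence E q) * tree_resistance E L p q)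
      = 2 * (\<Sum>p\<in>V. \<Sum>q\<in>V. tree_dist E L p q) - real (card V) * total_length E L"
    using key[OF T] by (simp add: tree_resistance_def sum_subtractf sum_distrib_left)
  have A: "wiener_index V E L =
           (1/4) * (real (card V) * total_length E L
              + (\<Sum>p\<in>V. \<Sum>q\<in>V. real (valence E q) * tree_resistance E L p q))"
    using S by (simp add: wiener_index_def)
  have B: "total_length E L = real (card V) - 1" if "\<forall>e\<in>E. L e = 1"
  proof -
    have "card V \<ge> 1" using T by (auto simp: metrized_tree_def card_gt_0_iff Suc_le_eq)
    then show ?thesis using that cardE[OF T] by (simp add: total_length_def of_nat_diff)
  qed
  show ?thesis using A B by simp
qed

end
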